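(* Let $K\ge1$ and fix $a_2,\dots,a_{K+1}\ge0$. For $x\ge0$ let $G(x)=P^{(1)}_{K+1}(x,a_2,\dots,a_{K+1})$ (path $v_0,\dots,v_{K+1}$). Let $\mathcal A_\theta$ be an $L$-layer MinAgg GNN with exactly $K$ message passing layers $\ell_1<\dots<\ell_K$. If for some $k\in[K]$ and some set $D\subseteq[0,\infty)$ the map $x\mapsto h^{(\ell_k)}_{v_{k+1}}(G(x))$ is constant on $D$, then $x\mapsto h^{(L)}_{v_{K+1}}(G(x))$ is also constant on $D$.
   Context: Attributed graphs have nonnegative edge weights and node features, a self-loop of weight $0$ at each node, and $\mathcal N(v)=\{v\}\cup\{u:\{u,v\}\in E\}$. A large constant $\beta>0$ encodes "infinite distance". For a source $s$, $\mathrm d^{(t)}(s,v)$ is the minimal weight of a walk from $s$ to $v$ with at most $t$ edges ($\beta$ if none). $P^{(t)}_k(a_1,\dots,a_k)$: path $v_0,\dots,v_k$, edge $\{v_{i-1},v_i\}$ of weight $a_i$, features $x_{v_i}=\mathrm d^{(t)}(v_0,v_i)$; in particular $P^{(1)}_{K+1}(x,a_2,\dots)$ has $x_{v_0}=0$, $x_{v_1}=x$, $x_{v_i}=\beta$ for $i\ge2$. MinAgg GNN: for each $\ell\in[L]$, ReLU MLPs ($x^{(j)}=\sigma(W_jx^{(j-1)}+b_j)$) $f^{\mathrm{agg},(\ell)}:\mathbb R^{d_{\ell-1}+1}\to\mathbb R^d$ and $f^{\mathrm{up},(\ell)}:\mathbb R^{d+d_{\ell-1}}\to\mathbb R^{d_\ell}$,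 $d_0=d_L=1$, $d_\ell=d$ otherwise; $h^{(0)}_v=x_v$, $h^{(\ell)}_v=f^{\mathrm{up},(\ell)}\big(\min_{u\in\mathcal N(v)}f^{\mathrm{agg},(\ell)}(h^{(\ell-1)}_u\oplus x_{(u,v)})\oplus h^{(\ell-1)}_v\big)$ (coordinatewise min, $\oplus$ concatenation). Node component of $f^{\mathrm{agg},(\ell)}$: its first $d_{\ell-1}$ input coordinates. A function on $\mathbb R^n_{\ge0}$ depends on a set $S$ of coordinates if some $x\ne y$ agreeing outside $S$ have different images. Layer $\ell$ is message passing if $f^{\mathrm{agg},(\ell)}$ depends on its node component, stationary otherwise. *)

theory Defs
  imports "HOL-Analysis.Analysis"
begin

text \<open>Vectors in R^n are real lists of length n. An MLP is a nonempty list of layers (W_j, b_j),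
  W_j given as list of rows; each layer computes x |-> relu(W_j x + b_j) coordinatewise.\<close>

type_synonym mlp = "(real list list \<times> real list) list"

definition relu :: "real \<Rightarrow> real" where
  "relu t = max 0 t"

definition mlp_layer :: "real list list \<times> real list \<Rightarrow> real list \<Rightarrow> real list" where
  "mlp_layer Wb x = map2 (\<lambda>row bi. relu (sum_list (map2 (*) row x) + bi)) (fst Wb) (snd Wb)"

definition mlp_eval :: "mlp \<Rightarrow> real list \<Rightarrow> real list" where
  "mlp_eval Ls x = fold mlp_layer Ls x"

primrec layers_wf :: "nat \<Rightarrow> nat \<Rightarrow> mlp \<Rightarrow> bool" where
  "layers_wf n m [] = (n = m)"
| "layers_wf n m (Wb # Ls) =
     (length (snd Wb) = length (fst Wb) \<and> (\<forall>row\<in>set (fst Wb). length row = n)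
      \<and> layers_wf (length (fst Wb)) m Ls)"

definition mlp_wf :: "nat \<Rightarrow> nat \<Rightarrow> mlp \<Rightarrow> bool" where
  "mlp_wf n m Ls = (Ls \<noteq> [] \<and> layers_wf n m Ls)"

definition depends_on :: "nat \<Rightarrow> (real list \<Rightarrow> real list) \<Rightarrow> nat set \<Rightarrow> bool" where
  "depends_on n f S = (\<exists>x y. length x = n \<and> length y = n \<and>
      (\<forall>i<n. 0 \<le> x ! i \<and> 0 \<le> y ! i) \<and> x \<noteq> y \<and>
      (\<forall>i<n. i \<notin> S \<longrightarrow> x ! i = y ! i) \<and> f x \<noteq> f y)"

definition layer_dim :: "nat \<Rightarrow> nat \<Rightarrow> nat \<Rightarrow> nat" where
  "layer_dim L d l = (if l = 0 \<or> l = L then 1 else d)"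

definition cmin :: "nat \<Rightarrow> real list set \<Rightarrow> real list" where
  "cmin d S = map (\<lambda>i. Min ((\<lambda>y. y ! i) ` S)) [0..<d]"

text \<open>Node embeddings h^(l)_v of a MinAgg GNN with aggregation MLPs fa l and update MLPs fu l
  (hidden dimension d), on a graph given by neighbourhoods N v (including v itself),
  edge features w u v (w v v = 0 for the self-loop) and node features x.\<close>
primrec gnn :: "nat \<Rightarrow> (nat \<Rightarrow> mlp) \<Rightarrow> (nat \<Rightarrow> mlp) \<Rightarrow> (nat \<Rightarrow> nat set)
    \<Rightarrow> (nat \<Rightarrow> nat \<Rightarrow> real) \<Rightarrow> (nat \<Rightarrow> real) \<Rightarrow> nat \<Rightarrow> nat \<Rightarrow> real list" where
  "gnn d fa fu N w x 0 = (\<lambda>v. [x v])"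
| "gnn d fa fu N w x (Suc l) =
     (let H = gnn d fa fu N w x l in
      (\<lambda>v. mlp_eval (fu (Suc l))
             (cmin d ((\<lambda>u. mlp_eval (fa (Suc l)) (H u @ [w u v])) ` N v) @ H v)))"

text \<open>Layer l is message passing iff its aggregation MLP depends on its node component
  (the first d_{l-1} input coordinates).\<close>
definition message_passing :: "nat \<Rightarrow> nat \<Rightarrow> (nat \<Rightarrow> mlp) \<Rightarrow> nat \<Rightarrow> bool" where
  "message_passing L d fa l =
     depends_on (layer_dim L d (l - 1) + 1) (mlp_eval (fa l)) {0..<layer_dim L d (l - 1)}"

text \<open>Nodes v_0..v_{K+1} are 0..K+1.\<close>
definition path_nbrs :: "nat \<Rightarrow> nat \<Rightarrow> nat set" where
  "path_nbrs K v = {v} \<union> {u. u \<le> K + 1 \<and> v \<le> K + 1 \<and> (u = v + 1 \<or> v = u + 1)}"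

text \<open>Edge {v_{i-1}, v_i} has weight a_i; self-loops have weight 0.\<close>
definition path_weight :: "(nat \<Rightarrow> real) \<Rightarrow> nat \<Rightarrow> nat \<Rightarrow> real" where
  "path_weight a u v = (if u = v then 0 else a (max u v))"

text \<open>Features d^(1)(v_0, v_i): 0 at v_0, x at v_1, beta elsewhere.\<close>
definition path_feat :: "real \<Rightarrow> real \<Rightarrow> nat \<Rightarrow> real" where
  "path_feat \<beta> x v = (if v = 0 then 0 else if v = 1 then x else \<beta>)"

definition path_gnn :: "nat \<Rightarrow> real \<Rightarrow> (nat \<Rightarrow> real) \<Rightarrow> nat \<Rightarrow> (nat \<Rightarrow> mlp) \<Rightarrow> (nat \<Rightarrow> mlp)
    \<Rightarrow> real \<Rightarrow> nat \<Rightarrow> nat \<Rightarrow> real list" where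
  "path_gnn K \<beta> a d fa fu x l v =
     gnn d fa fu (path_nbrs K) (path_weight (a(1 := x))) (path_feat \<beta> x) l v"

end

theory Submission
  imports Defs
begin

lemma mlp_layer_len: "length (mlp_layer Wb x) = min (length (fst Wb)) (length (snd Wb))"
  by (simp add: mlp_layer_def)

lemma layers_wf_len: "layers_wf n m Ls \<Longrightarrow> length x = n \<Longrightarrow> length (fold mlp_layer Ls x) = m"
proof (induction Ls arbitrary: n x)
  case Nil then show ?case by simp
next
  case (Cons Wb Ls)
  then show ?case by (metis layers_wf.simps(2) mlp_layer_len min.idem fold_simps(2))
qed

lemma mlp_layer_nonneg: "z \<in> set (mlp_layer Wb x) \<Longrightarrow> 0 \<le> z"
  by (auto simp: mlp_layer_def relu_def set_zip)

lemma fold_nonneg: "Ls \<noteq> [] \<Longrightarrow> z \<in> set (fold mlp_layer Ls x) \<Longrightarrow> 0 \<le> z"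
proof (induction Ls arbitrary: x)
  case Nil then show ?case by simp
next
  case (Cons Wb Ls)
  show ?case
  proof (cases "Ls = []")
    case True then show ?thesis using Cons.prems by (auto intro: mlp_layer_nonneg)
  next
    case False then show ?thesis using Cons by simp
  qed
qed

lemma mlp_wf_eval:
  assumes "mlp_wf n m Ls" "length x = n"
  shows "length (mlp_eval Ls x) = m" "\<forall>z\<in>set (mlp_eval Ls x). 0 \<le> z"
  using assms layers_wf_len fold_nonneg by (auto simp: mlp_wf_def mlp_eval_def)

lemma stationary:
  assumes "\<not> message_passing L d fa l"
    and "length p = layer_dim L d (l - 1)" "length q = layer_dim L d (l - 1)"
    and "\<forall>z\<in>set p. 0 \<le> z" "\<forall>z\<in>set q. 0 \<le> z" "0 \<le> (e::real)"
  shows "mlp_eval (fa l) (p @ [e]) = mlp_eval (fa l) (q @ [e])"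
proof (rule ccontr)
  assume ne: "mlp_eval (fa l) (p @ [e]) \<noteq> mlp_eval (fa l) (q @ [e])"
  let ?n = "layer_dim L d (l - 1)"
  have "depends_on (?n + 1) (mlp_eval (fa l)) {0..<?n}"
    unfolding depends_on_def
  proof (intro exI conjI allI impI)
    show "length (p @ [e]) = ?n + 1" "length (q @ [e]) = ?n + 1" using assms by auto
    fix i assume i: "i < ?n + 1"
    show "0 \<le> (p @ [e]) ! i" using assms i by (auto simp: nth_append)
    show "0 \<le> (q @ [e]) ! i" using assms i by (auto simp: nth_append)
  next
    fix i assume i: "i < ?n + 1" "i \<notin> {0..<?n}"
    then have "i = ?n" by auto
    then show "(p @ [e]) ! i = (q @ [e]) ! i" using assms by (simp add: nth_append)
  next
    show "p @ [e] \<noteq> q @ [e]" using ne by auto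
    show "mlp_eval (fa l) (p @ [e]) \<noteq> mlp_eval (fa l) (q @ [e])" by (rule ne)
  qed
  then show False using assms(1) by (simp add: message_passing_def)
qed

lemma gnn_Suc:
  "path_gnn K \<beta> a d fa fu x (Suc l) v =
   mlp_eval (fu (Suc l)) (cmin d ((\<lambda>u. mlp_eval (fa (Suc l))
      (path_gnn K \<beta> a d fa fu x l u @ [path_weight (a(1:=x)) u v])) ` path_nbrs K v)
      @ path_gnn K \<beta> a d fa fu x l v)"
  by (simp add: path_gnn_def Let_def)

lemma weight_indep: "2 \<le> v \<Longrightarrow> path_weight (a(1:=x)) u v = path_weight a u v"
  by (simp add: path_weight_def max_def)

lemma nbrs_ge: "u \<in> path_nbrs K v \<Longrightarrow> v - 1 \<le> u"
  by (auto simp: path_nbrs_def)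

lemma cnt_step:
  fixes ls :: "nat \<Rightarrow> nat"
  assumes inj: "inj_on ls {1..K}" and j0: "j0 \<in> {1..K}" "ls j0 = Suc l"
  shows "card {j\<in>{1..K}. ls j \<le> Suc l} = Suc (card {j\<in>{1..K}. ls j \<le> l})"
proof -
  have "{j\<in>{1..K}. ls j \<le> Suc l} = insert j0 {j\<in>{1..K}. ls j \<le> l}"
    proof (intro set_eqI iffI)
      fix j assume j: "j \<in> {j\<in>{1..K}. ls j \<le> Suc l}"
      show "j \<in> insert j0 {j\<in>{1..K}. ls j \<le> l}"
      proof (cases "ls j = Suc l")
        case True
        then have "ls j = ls j0" using j0 by simp
        then have "j = j0" using inj_onD[OF inj] j j0 by simp
        then show ?thesis by simp
      next
        case False then show ?thesis using j by simp
      qed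
    next
      fix j assume "j \<in> insert j0 {j\<in>{1..K}. ls j \<le> l}"
      then show "j \<in> {j\<in>{1..K}. ls j \<le> Suc l}" using j0 by auto
    qed
  moreover have "j0 \<notin> {j\<in>{1..K}. ls j \<le> l}" using j0 by simp
  ultimately show ?thesis by simp
qed

lemma cnt_same:
  fixes ls :: "nat \<Rightarrow> nat"
  assumes nn: "Suc l \<notin> ls ` {1..K}"
  shows "card {j\<in>{1..K}. ls j \<le> Suc l} = card {j\<in>{1..K}. ls j \<le> l}"
proof -
  have "{j\<in>{1..K}. ls j \<le> Suc l} = {j\<in>{1..K}. ls j \<le> l}"
  proof (intro Collect_cong conj_cong refl)
    fix j assume j: "j \<in> {1..K}"
    have "ls j \<noteq> Suc l"
    proof
      assume "ls j = Suc l"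
      then show False using nn image_eqI[of "Suc l" ls j "{1..K}"] j by simp
    qed
    then show "(ls j \<le> Suc l) = (ls j \<le> l)" by auto
  qed
  then show ?thesis by simp
qed

lemma cnt_k:
  fixes ls :: "nat \<Rightarrow> nat"
  assumes sm: "strict_mono_on {1..K} ls" and k: "k \<in> {1..K}"
  shows "card {j\<in>{1..K}. ls j \<le> ls k} = k"
proof -
  have e: "ls j \<le> ls k \<longleftrightarrow> j \<le> k" if "j \<in> {1..K}" for j
    using strict_mono_on_less_eq[OF sm that k] .
  have "{j\<in>{1..K}. ls j \<le> ls k} = {1..k}"
  proof (intro set_eqI iffI)
    fix j assume "j \<in> {j\<in>{1..K}. ls j \<le> ls k}"
    then show "j \<in> {1..k}" using e[of j] by auto
  next
    fix j assume "j \<in> {1..k}"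
    then show "j \<in> {j\<in>{1..K}. ls j \<le> ls k}" using e[of j] k by auto
  qed
  then show ?thesis by simp
qed

lemma cnt_all:
  fixes ls :: "nat \<Rightarrow> nat"
  assumes "\<And>j. j \<in> {1..K} \<Longrightarrow> ls j \<le> L"
  shows "card {j\<in>{1..K}. ls j \<le> L} = K"
proof -
  have "{j\<in>{1..K}. ls j \<le> L} = {1..K}" using assms by auto
  then show ?thesis by simp
qed

lemma cnt_0:
  fixes ls :: "nat \<Rightarrow> nat"
  assumes "\<And>j. j \<in> {1..K} \<Longrightarrow> 1 \<le> ls j"
  shows "card {j\<in>{1..K}. ls j \<le> 0} = 0"
proof -
  have "{j\<in>{1..K}. ls j \<le> 0} = {}"
  proof (rule equals0I)
    fix j assume j: "j \<in> {j\<in>{1..K}. ls j \<le> 0}"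
    then have "1 \<le> ls j" using assms[of j] by simp
    then show False using j by simp
  qed
  then show ?thesis by simp
qed

lemma cnt_mono:
  fixes ls :: "nat \<Rightarrow> nat"
  shows "l \<le> l' \<Longrightarrow> card {j\<in>{1..K}. ls j \<le> l} \<le> card {j\<in>{1..K}. ls j \<le> l'}"
  by (intro card_mono) auto

theorem mainTheorem11:
  fixes K L d k :: nat and \<beta> :: real and a :: "nat \<Rightarrow> real"
    and fa fu :: "nat \<Rightarrow> mlp" and ls :: "nat \<Rightarrow> nat" and D :: "real set"
  assumes "K \<ge> 1" and "d \<ge> 1" and "\<beta> > 0"
    and "\<forall>i\<in>{2..K+1}. a i \<ge> 0"
    and "\<forall>l\<in>{1..L}. mlp_wf (layer_dim L d (l - 1) + 1) d (fa l)
                    \<and> mlp_wf (d + layer_dim L d (l - 1)) (layer_dim L d l) (fu l)"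
    and "strict_mono_on {1..K} ls"
    and "{l\<in>{1..L}. message_passing L d fa l} = ls ` {1..K}"
    and "k \<in> {1..K}" and "D \<subseteq> {0..}"
    and "\<exists>c. \<forall>x\<in>D. path_gnn K \<beta> a d fa fu x (ls k) (k + 1) = c"
  shows "\<exists>c. \<forall>x\<in>D. path_gnn K \<beta> a d fa fu x L (K + 1) = c"
proof -
  note wf = assms(5) and sm = assms(6) and mp = assms(7)
  define G where "G x l v = path_gnn K \<beta> a d fa fu x l v" for x l v
  define P where "P l m = (\<forall>v\<ge>m. \<forall>x\<in>D. \<forall>y\<in>D. G x l v = G y l v)" for l m
  define c where "c l = card {j\<in>{1..K}. ls j \<le> l}" for l
  have lsr: "ls j \<in> {1..L}" if "j \<in> {1..K}" for j using mp that by blast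
  have injls: "inj_on ls {1..K}" using sm by (rule strict_mono_on_imp_inj_on)
  have len: "length (G x l v) = layer_dim L d l \<and> (\<forall>z\<in>set (G x l v). 0 \<le> z)"
    if "l \<le> L" "x \<ge> 0" for x l v
    using that(1)
  proof (induction l arbitrary: v)
    case 0 then show ?case using that(2) assms(3)
      by (simp add: G_def path_gnn_def path_feat_def layer_dim_def)
  next
    case (Suc l)
    have w: "mlp_wf (d + layer_dim L d l) (layer_dim L d (Suc l)) (fu (Suc l))"
      using wf Suc.prems by (metis atLeastAtMost_iff diff_Suc_1 le_add1 plus_1_eq_Suc)
    have "length (cmin d ((\<lambda>u. mlp_eval (fa (Suc l))
           (G x l u @ [path_weight (a(1:=x)) u v])) ` path_nbrs K v) @ G x l v) = d + layer_dim L d l"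
      using Suc by (simp add: cmin_def)
    from mlp_wf_eval[OF w this] show ?case unfolding G_def gnn_Suc by simp
  qed
  have stat: "P (Suc l) m" if "Suc l \<le> L" "2 \<le> m" "P l m" "\<not> message_passing L d fa (Suc l)"
    for l m
    unfolding P_def
  proof (intro allI impI ballI)
    fix v x y assume v: "m \<le> v" and x: "x \<in> D" and y: "y \<in> D"
    have x0: "x \<ge> 0" and y0: "y \<ge> 0" using x y assms(9) by auto
    have img: "(\<lambda>u. mlp_eval (fa (Suc l)) (G x l u @ [path_weight (a(1:=x)) u v])) ` path_nbrs K v
       = (\<lambda>u. mlp_eval (fa (Suc l)) (G y l u @ [path_weight (a(1:=y)) u v])) ` path_nbrs K v"
    proof (rule image_cong[OF refl])
      fix u assume u: "u \<in> path_nbrs K v"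
      have e0: "0 \<le> path_weight a u v"
        using u v that(2) assms(4) by (auto simp: path_weight_def path_nbrs_def max_def)
      have w1: "path_weight (a(1:=x)) u v = path_weight a u v"
        and w2: "path_weight (a(1:=y)) u v = path_weight a u v"
        using v that(2) weight_indep by auto
      have lx: "length (G x l u) = layer_dim L d (Suc l - 1)" "\<forall>z\<in>set (G x l u). 0 \<le> z"
        using len[of l x u] that(1) x0 by auto
      have ly: "length (G y l u) = layer_dim L d (Suc l - 1)" "\<forall>z\<in>set (G y l u). 0 \<le> z"
        using len[of l y u] that(1) y0 by auto
      show "mlp_eval (fa (Suc l)) (G x l u @ [path_weight (a(1:=x)) u v])
          = mlp_eval (fa (Suc l)) (G y l u @ [path_weight (a(1:=y)) u v])"
        unfolding w1 w2 by (rule stationary[OF that(4) lx(1) ly(1) lx(2) ly(2) e0])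
    qed
    have eq: "G x l v = G y l v" using that(3) v x y unfolding P_def by blast
    show "G x (Suc l) v = G y (Suc l) v"
      using img eq unfolding G_def gnn_Suc by (simp only:)
  qed
  have mps: "P (Suc l) (Suc m)" if "2 \<le> m" "P l m" for l m
    unfolding P_def
  proof (intro allI impI ballI)
    fix v x y assume v: "Suc m \<le> v" and x: "x \<in> D" and y: "y \<in> D"
    have img: "(\<lambda>u. mlp_eval (fa (Suc l)) (G x l u @ [path_weight (a(1:=x)) u v])) ` path_nbrs K v
       = (\<lambda>u. mlp_eval (fa (Suc l)) (G y l u @ [path_weight (a(1:=y)) u v])) ` path_nbrs K v"
    proof (rule image_cong[OF refl])
      fix u assume u: "u \<in> path_nbrs K v"
      have "m \<le> u" using nbrs_ge[OF u] v by auto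
      then have eu: "G x l u = G y l u" using that(2) x y unfolding P_def by blast
      have w1: "path_weight (a(1:=x)) u v = path_weight a u v"
        and w2: "path_weight (a(1:=y)) u v = path_weight a u v"
        using v that(1) weight_indep by auto
      show "mlp_eval (fa (Suc l)) (G x l u @ [path_weight (a(1:=x)) u v])
          = mlp_eval (fa (Suc l)) (G y l u @ [path_weight (a(1:=y)) u v])"
        unfolding w1 w2 eu ..
    qed
    have eq: "G x l v = G y l v" using that(2) Suc_leD[OF v] x y unfolding P_def by blast
    show "G x (Suc l) v = G y (Suc l) v"
      using img eq unfolding G_def gnn_Suc by (simp only:)
  qed
  have c0: "c 0 = 0" unfolding c_def by (rule cnt_0) (use lsr in auto)
  have cmp: "c (Suc l) = Suc (c l)" if "Suc l \<le> L" "message_passing L d fa (Suc l)" for l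
  proof -
    have "Suc l \<in> {l\<in>{1..L}. message_passing L d fa l}" using that by simp
    then have "Suc l \<in> ls ` {1..K}" unfolding mp .
    then obtain j0 where j0': "j0 \<in> {1..K}" "Suc l = ls j0" by (rule imageE)
    then have j0: "j0 \<in> {1..K}" "ls j0 = Suc l" by auto
    show ?thesis unfolding c_def by (rule cnt_step[OF injls j0])
  qed
  have cst: "c (Suc l) = c l" if "Suc l \<le> L" "\<not> message_passing L d fa (Suc l)" for l
  proof -
    have "Suc l \<notin> {l\<in>{1..L}. message_passing L d fa l}" using that by simp
    then have "Suc l \<notin> ls ` {1..K}" unfolding mp .
    then show ?thesis unfolding c_def by (rule cnt_same)
  qed
  have ck: "c (ls k) = k" unfolding c_def by (rule cnt_k[OF sm assms(8)])
  have cL: "c L = K" unfolding c_def by (rule cnt_all) (use lsr in auto)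
  have lk: "1 \<le> ls k" "ls k \<le> L" using lsr[OF assms(8)] by auto
  have hk: "\<forall>x\<in>D. \<forall>y\<in>D. G x (ls k) (k+1) = G y (ls k) (k+1)"
    using assms(10) by (auto simp: G_def)
  have inv: "(l \<le> ls k \<longrightarrow> P l (c l + 2)) \<and> (ls k \<le> l \<longrightarrow> P l (c l + 1))" if "l \<le> L" for l
    using that
  proof (induction l)
    case 0
    have "P 0 2" by (auto simp: P_def G_def path_gnn_def path_feat_def)
    then show ?case using c0 lk by (simp add: numeral_2_eq_2)
  next
    case (Suc l)
    have IH: "(l \<le> ls k \<longrightarrow> P l (c l + 2)) \<and> (ls k \<le> l \<longrightarrow> P l (c l + 1))"
      using Suc by simp
    have step: "P (Suc l) (c (Suc l) + j)" if "P l (c l + j)" "1 \<le> j" "2 \<le> c l + j" for j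
    proof (cases "message_passing L d fa (Suc l)")
      case True
      then show ?thesis using mps[OF that(3,1)] cmp[OF Suc.prems] by simp
    next
      case False
      then show ?thesis using stat[OF Suc.prems that(3,1)] cst[OF Suc.prems] by simp
    qed
    show ?case
    proof (cases "Suc l \<le> ls k")
      case True
      then have p: "P (Suc l) (c (Suc l) + 2)" using IH step[of 2] by simp
      moreover have "ls k \<le> Suc l \<longrightarrow> P (Suc l) (c (Suc l) + 1)"
      proof
        assume "ls k \<le> Suc l"
        then have e: "Suc l = ls k" using True by simp
        show "P (Suc l) (c (Suc l) + 1)" unfolding P_def
        proof (intro allI impI)
          fix v assume "c (Suc l) + 1 \<le> v"
          then consider "v = k + 1" | "c (Suc l) + 2 \<le> v" using e ck by force
          then show "\<forall>x\<in>D. \<forall>y\<in>D. G x (Suc l) v = G y (Suc l) v"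
            using hk[folded e] p unfolding P_def by cases blast+
        qed
      qed
      ultimately show ?thesis by simp
    next
      case False
      then have "ls k \<le> l" by simp
      moreover have "k \<le> c l"
      proof -
        have "c (ls k) \<le> c l" unfolding c_def by (rule cnt_mono) fact
        then show ?thesis using ck by simp
      qed
      ultimately have "P (Suc l) (c (Suc l) + 1)" using IH step[of 1] assms(8) by auto
      then show ?thesis using False by simp
    qed
  qed
  have "P L (K + 1)" using inv[of L] lk cL by simp
  then have "\<forall>x\<in>D. \<forall>y\<in>D. G x L (K+1) = G y L (K+1)" unfolding P_def by blast
  then show ?thesis unfolding G_def by blast
qed

end
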